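(* $\mathsf{Clique}\in\mathsf{dMAM}[O(1)]$, where, for a parameter $K$ known to all nodes, $\mathsf{Clique}$ is the language of $n$-node communication graphs $G$ that contain a clique of size $K$.
   Context: Distributed interactive proofs (model). An instance consists of a connected communication graph $G=(V,E)$ with $|V|=n$, where each node has a unique identifier of $O(\log n)$ bits, knows $n$, knows its own identifier, its local input (if the problem has local inputs), and the identifiers of its neighbours (with an arbitrary port numbering of its incident edges). A prover, who sees the whole instance, interacts with all nodes in $r$ alternating messages. In a verifier (node) message each node independently samples fresh uniformly random bits and sends them to the prover (public coins). In a prover message the prover sends each node a string. Nodes may additionally exchange the strings they received from the prover with their neighbours in $G$. At the end each node deterministically accepts or rejects as a function of its local information, its own random bits, the strings it received from the prover and those its neighbours received; the instance is accepted iff all nodes accept. The proof size is the maximum number of bits in any single message between the prover and any node. A language $\mathcal L$ (set of instances) is in $\mathsf{dIP}[r,\ell]$ if there is an $r$-message protocol of proof size $\ell=\ell(n)$ such that (completeness) for every instance in $\mathcal L$ some prover makes all nodes accept with probability $>2/3$, and (soundness) for every instance not in $\mathcal L$ and every prover, all nodes accept with probability $<1/3$ (probabilities over the nodes' coins). $\mathsf{dAM}[\ell]$, $\mathsf{dMAM}[\ell]$, $\mathsf{dAMAM}[\ell]$, $\mathsf{dMAMAM}[\ell]$ denote the cases of 2, 3, 4, 5 messages, where the letters indicate who sends each message in order (A = nodes send random coins, M = prover). *)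

theory Defs
  imports Complex_Main "HOL-Library.FuncSet"
begin

text \<open>Instances: a communication graph with vertex set V (vertices are their own unique
  natural-number identifiers) and a symmetric irreflexive edge relation E on V; connected.\<close>

definition graph_inst :: "nat set \<Rightarrow> (nat \<Rightarrow> nat \<Rightarrow> bool) \<Rightarrow> bool" where
  "graph_inst V E \<longleftrightarrow> finite V \<and> V \<noteq> {}
     \<and> (\<forall>x y. E x y \<longrightarrow> x \<in> V \<and> y \<in> V)
     \<and> (\<forall>x y. E x y \<longrightarrow> E y x) \<and> (\<forall>x. \<not> E x x)
     \<and> (\<forall>x\<in>V. \<forall>y\<in>V. E\<^sup>*\<^sup>* x y)"

text \<open>A node decision function receives: n, its own identifier, the identifiers of its
  neighbours, its own random bits, the two prover strings it received, and the pair of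
  prover strings received by each neighbour (None for non-neighbours).\<close>

type_synonym decider =
  "nat \<Rightarrow> nat \<Rightarrow> nat set \<Rightarrow> bool list \<Rightarrow> bool list \<Rightarrow> bool list
     \<Rightarrow> (nat \<Rightarrow> (bool list \<times> bool list) option) \<Rightarrow> bool"

definition nbr_msgs ::
  "(nat \<Rightarrow> nat \<Rightarrow> bool) \<Rightarrow> nat \<Rightarrow> (nat \<Rightarrow> bool list) \<Rightarrow> (nat \<Rightarrow> bool list)
     \<Rightarrow> nat \<Rightarrow> (bool list \<times> bool list) option" where
  "nbr_msgs E v m1 m2 = (\<lambda>u. if E v u then Some (m1 u, m2 u) else None)"

definition all_accept ::
  "decider \<Rightarrow> nat set \<Rightarrow> (nat \<Rightarrow> nat \<Rightarrow> bool) \<Rightarrow> (nat \<Rightarrow> bool list)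
     \<Rightarrow> (nat \<Rightarrow> bool list) \<Rightarrow> (nat \<Rightarrow> bool list) \<Rightarrow> bool" where
  "all_accept D V E \<rho> m1 m2 \<longleftrightarrow>
     (\<forall>v\<in>V. D (card V) v {u. E v u} (\<rho> v) (m1 v) (m2 v) (nbr_msgs E v m1 m2))"

definition coins :: "nat set \<Rightarrow> nat \<Rightarrow> (nat \<Rightarrow> bool list) set" where
  "coins V r = (\<Pi>\<^sub>E v\<in>V. {xs. length xs = r})"

text \<open>Acceptance probability of a 3-message (M A M) interaction: first prover message m1,
  then each node sends r coins, then the prover answers with m2 (depending on all coins).\<close>

definition acc_prob ::
  "decider \<Rightarrow> nat \<Rightarrow> nat set \<Rightarrow> (nat \<Rightarrow> nat \<Rightarrow> bool) \<Rightarrow> (nat \<Rightarrow> bool list)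
     \<Rightarrow> ((nat \<Rightarrow> bool list) \<Rightarrow> nat \<Rightarrow> bool list) \<Rightarrow> real" where
  "acc_prob D r V E m1 m2 =
     real (card {\<rho> \<in> coins V r. all_accept D V E \<rho> m1 (m2 \<rho>)}) / real (card (coins V r))"

definition dMAM :: "(nat \<Rightarrow> nat) \<Rightarrow> (nat set \<times> (nat \<Rightarrow> nat \<Rightarrow> bool)) set \<Rightarrow> bool" where
  "dMAM l L \<longleftrightarrow> (\<exists>(r :: nat \<Rightarrow> nat) (D :: decider). (\<forall>n. r n \<le> l n) \<and>
     (\<forall>V E. graph_inst V E \<longrightarrow>
        ((V, E) \<in> L \<longrightarrow>
           (\<exists>m1 m2. (\<forall>v. length (m1 v) \<le> l (card V)) \<and> (\<forall>\<rho> v. length (m2 \<rho> v) \<le> l (card V))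
                 \<and> acc_prob D (r (card V)) V E m1 m2 > 2/3))
      \<and> ((V, E) \<notin> L \<longrightarrow>
           (\<forall>m1 m2. acc_prob D (r (card V)) V E m1 m2 < 1/3))))"

definition clique_lang :: "nat \<Rightarrow> (nat set \<times> (nat \<Rightarrow> nat \<Rightarrow> bool)) set" where
  "clique_lang K = {(V, E). \<exists>S \<subseteq> V. card S = K \<and> (\<forall>x\<in>S. \<forall>y\<in>S. x \<noteq> y \<longrightarrow> E x y)}"

end

theory Submission
  imports Defs
begin

definition xorset :: "(nat \<Rightarrow> bool) \<Rightarrow> nat set \<Rightarrow> bool" where
  "xorset f A = odd (card {x\<in>A. f x})"

lemma xorset_remove:
  assumes "finite A" "w \<in> A"
  shows "xorset f A = (f w \<noteq> xorset f (A - {w}))"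
proof -
  have "{x\<in>A. f x} = (if f w then insert w {x\<in>A - {w}. f x} else {x\<in>A - {w}. f x})"
    using assms by auto
  moreover have "finite {x\<in>A - {w}. f x}" using assms by auto
  ultimately show ?thesis unfolding xorset_def by auto
qed

lemma xorset_notin:
  assumes "w \<notin> A" shows "xorset f A = xorset f (A - {w})"
  using assms by simp

lemma xorset_diff:
  assumes "finite A" "finite B" "w \<in> A" "w \<notin> B" "xorset f A = xorset f B"
  shows "f w = (xorset f (A - {w}) \<noteq> xorset f (B - {w}))"
proof -
  have 1: "xorset f A = (f w \<noteq> xorset f (A - {w}))" by (rule xorset_remove[OF assms(1,3)])
  have 2: "B - {w} = B" using assms(4) by simp
  show ?thesis using 1 2 assms(5) by auto
qed

lemma xorset_cong:
  assumes "\<And>x. x \<in> A \<Longrightarrow> f x = g x" shows "xorset f A = xorset g A"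
proof -
  have "{x\<in>A. f x} = {x\<in>A. g x}" using assms by auto
  then show ?thesis unfolding xorset_def by simp
qed

lemma finite_coins: "finite V \<Longrightarrow> finite (coins V r)"
proof -
  assume "finite V"
  have "finite {xs::bool list. length xs = r}"
    using finite_lists_length_eq[of "UNIV::bool set" r] by simp
  then show ?thesis unfolding coins_def using \<open>finite V\<close> by (intro finite_PiE) auto
qed

lemma coins_ne: "coins V r \<noteq> {}"
proof -
  have "{xs::bool list. length xs = r} \<noteq> {}" using length_replicate[of r False] by blast
  then show ?thesis unfolding coins_def by (simp add: PiE_eq_empty_iff)
qed

lemma len2: "length xs = 2 \<Longrightarrow> xs = [xs ! 0, xs ! 1]"
  by (cases xs; cases "tl xs"; auto)

lemma count4:
  assumes fin: "finite V" and wV: "w \<in> V" and A: "A \<subseteq> coins V 2"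
    and FG: "\<forall>\<rho>\<in>A. \<rho> w ! 0 = F \<rho> \<and> \<rho> w ! 1 = G \<rho>"
    and Finv: "\<And>\<rho> xs. F (\<rho>(w := xs)) = F \<rho>" and Ginv: "\<And>\<rho> xs. G (\<rho>(w := xs)) = G \<rho>"
  shows "card A * 4 \<le> card (coins V 2)"
proof -
  define M where "M = (\<lambda>(\<rho>::nat \<Rightarrow> bool list, (c::bool, d::bool)). \<rho>(w := [F \<rho> \<noteq> c, G \<rho> \<noteq> d]))"
  have inj: "inj_on M (A \<times> UNIV)"
  proof (rule inj_onI)
    fix a b assume a: "a \<in> A \<times> UNIV" and b: "b \<in> A \<times> UNIV" and eq: "M a = M b"
    obtain \<rho> c d where a': "a = (\<rho>, c, d)" by (cases a) auto
    obtain \<rho>' c' d' where b': "b = (\<rho>', c', d')" by (cases b) auto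
    have r: "\<rho> \<in> A" "\<rho>' \<in> A" using a b a' b' by auto
    have e: "\<rho>(w := [F \<rho> \<noteq> c, G \<rho> \<noteq> d]) = \<rho>'(w := [F \<rho>' \<noteq> c', G \<rho>' \<noteq> d'])"
      using eq a' b' by (simp add: M_def)
    have F: "F \<rho> = F \<rho>'" using arg_cong[OF e, of F] Finv by simp
    have G: "G \<rho> = G \<rho>'" using arg_cong[OF e, of G] Ginv by simp
    have lst: "[F \<rho> \<noteq> c, G \<rho> \<noteq> d] = [F \<rho>' \<noteq> c', G \<rho>' \<noteq> d']" using fun_cong[OF e, of w] by simp
    have cd: "c = c'" "d = d'" using lst F G by auto
    have len: "length (\<rho> w) = 2" "length (\<rho>' w) = 2"
      using r A wV unfolding coins_def by (auto simp: PiE_iff)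
    have "\<rho> w = [\<rho> w ! 0, \<rho> w ! 1]" using len(1) by (rule len2)
    moreover have "\<rho>' w = [\<rho>' w ! 0, \<rho>' w ! 1]" using len(2) by (rule len2)
    ultimately have "\<rho> w = \<rho>' w" using FG r F G by auto
    moreover have "\<forall>x. x \<noteq> w \<longrightarrow> \<rho> x = \<rho>' x" using e by (metis fun_upd_other)
    ultimately have "\<rho> = \<rho>'" by (intro ext) (case_tac "x = w"; simp)
    then show "a = b" using a' b' cd by simp
  qed
  have img: "M ` (A \<times> UNIV) \<subseteq> coins V 2"
  proof
    fix y assume "y \<in> M ` (A \<times> UNIV)"
    then obtain \<rho> c d where "\<rho> \<in> A" "y = \<rho>(w := [F \<rho> \<noteq> c, G \<rho> \<noteq> d])" by (auto simp: M_def)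
    then show "y \<in> coins V 2" using A wV unfolding coins_def by (auto simp: PiE_iff extensional_def)
  qed
  have "card (A \<times> (UNIV :: (bool \<times> bool) set)) \<le> card (coins V 2)"
    using card_inj_on_le[OF inj img finite_coins[OF fin]] .
  moreover have "card (A \<times> (UNIV :: (bool \<times> bool) set)) = card A * 4"
  proof -
    have u: "(UNIV::(bool\<times>bool) set) = {(False,False),(False,True),(True,False),(True,True)}" by auto
    have "card (UNIV::(bool\<times>bool) set) = 4" unfolding u by simp
    then show ?thesis by (simp add: card_cartesian_product)
  qed
  ultimately show ?thesis by simp
qed

lemma acc_small:
  assumes "finite V" "card {\<rho> \<in> coins V 2. P \<rho>} * 4 \<le> card (coins V 2)"
  shows "real (card {\<rho> \<in> coins V 2. P \<rho>}) / real (card (coins V 2)) < 1/3"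
proof -
  define x where "x = card {\<rho> \<in> coins V 2. P \<rho>}"
  define y where "y = card (coins V 2)"
  have pos: "y > 0" unfolding y_def using finite_coins[OF assms(1)] coins_ne by (simp add: card_gt_0_iff)
  have a: "x * 4 \<le> y" using assms(2) unfolding x_def y_def .
  have b: "real x * 4 \<le> real y" using a of_nat_le_iff[of "x*4" y] by simp
  have c: "real y > 0" using pos by simp
  have "real x < 1/3 * real y" using b c by linarith
  then have "real x / real y < 1/3" using c by (simp add: pos_divide_less_eq)
  then show ?thesis unfolding x_def y_def .
qed

definition lab :: "bool list \<Rightarrow> nat" where
  "lab ms = (if ms ! 1 then 1 else 0) + (if ms ! 2 then 1 else 0)"

definition psetD :: "(nat \<Rightarrow> (bool list \<times> bool list) option) \<Rightarrow> nat set \<Rightarrow> bool list \<Rightarrow> nat set" where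
  "psetD nb N m1v = {u\<in>N. lab (fst (the (nb u))) = (lab m1v + 2) mod 3}"

definition pset :: "(nat \<Rightarrow> nat \<Rightarrow> bool) \<Rightarrow> (nat \<Rightarrow> bool list) \<Rightarrow> nat \<Rightarrow> nat set" where
  "pset E m1 v = {u. E v u \<and> lab (m1 u) = (lab (m1 v) + 2) mod 3}"

definition DK :: "nat \<Rightarrow> decider" where
  "DK K n v N rv m1v m2v nb \<longleftrightarrow>
   (0 < K \<longrightarrow>
     (m2v ! 0 = rv ! 0 \<and> m2v ! 1 = rv ! 1 \<and>
      (if m1v ! 0 then
         card {u\<in>N. fst (the (nb u)) ! 0} = K - 1 \<and>
         (\<forall>j<2. m2v ! (4+j) = (rv ! j \<noteq> odd (card {u\<in>N. fst (the (nb u)) ! 0 \<and> snd (the (nb u)) ! j}))) \<and>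
         (\<forall>u\<in>N. fst (the (nb u)) ! 0 \<longrightarrow> (\<forall>j<2. snd (the (nb u)) ! (4+j) = m2v ! (4+j)))
       else
         psetD nb N m1v \<noteq> {} \<and>
         (\<forall>j<2. m2v ! (2+j) = (snd (the (nb (Min (psetD nb N m1v)))) ! (2+j) \<noteq> rv ! j)))))"

lemma DK_nbr:
  assumes fin: "finite {u. E v u}"
  shows
  "DK K n v {u. E v u} rv (mA v) (mB v) (nbr_msgs E v mA mB) \<longleftrightarrow>
   (0 < K \<longrightarrow>
     (mB v ! 0 = rv ! 0 \<and> mB v ! 1 = rv ! 1 \<and>
      (if mA v ! 0 then
         card {u. E v u \<and> mA u ! 0} = K - 1 \<and>
         (\<forall>j<2. mB v ! (4+j) = (rv ! j \<noteq> odd (card {u. E v u \<and> mA u ! 0 \<and> mB u ! j}))) \<and>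
         (\<forall>u. E v u \<longrightarrow> mA u ! 0 \<longrightarrow> (\<forall>j<2. mB u ! (4+j) = mB v ! (4+j)))
       else
         pset E mA v \<noteq> {} \<and>
         (\<forall>j<2. mB v ! (2+j) = (mB (Min (pset E mA v)) ! (2+j) \<noteq> rv ! j)))))"
proof -
  let ?nb = "nbr_msgs E v mA mB"
  have p: "psetD ?nb {u. E v u} (mA v) = pset E mA v"
    by (auto simp: psetD_def pset_def nbr_msgs_def)
  have c1: "{u\<in>{u. E v u}. fst (the (?nb u)) ! 0} = {u. E v u \<and> mA u ! 0}"
    by (auto simp: nbr_msgs_def)
  have c2: "\<And>j. {u\<in>{u. E v u}. fst (the (?nb u)) ! 0 \<and> snd (the (?nb u)) ! j} = {u. E v u \<and> mA u ! 0 \<and> mB u ! j}"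
    by (auto simp: nbr_msgs_def)
  have c3: "(\<forall>u\<in>{u. E v u}. fst (the (?nb u)) ! 0 \<longrightarrow> (\<forall>j<2. snd (the (?nb u)) ! (4+j) = mB v ! (4+j)))
     = (\<forall>u. E v u \<longrightarrow> mA u ! 0 \<longrightarrow> (\<forall>j<2. mB u ! (4+j) = mB v ! (4+j)))"
    by (auto simp: nbr_msgs_def)
  have c4: "pset E mA v \<noteq> {} \<Longrightarrow> snd (the (?nb (Min (pset E mA v)))) = mB (Min (pset E mA v))"
  proof -
    assume ne: "pset E mA v \<noteq> {}"
    have "finite (pset E mA v)" using fin by (rule rev_finite_subset) (auto simp: pset_def)
    then have "Min (pset E mA v) \<in> pset E mA v" using ne by (rule Min_in)
    then show ?thesis by (simp add: pset_def nbr_msgs_def)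
  qed
  show ?thesis
  proof (cases "pset E mA v = {}")
    case True
    then show ?thesis unfolding DK_def p c1 c2 c3 by simp
  next
    case False
    then show ?thesis unfolding DK_def p c1 c2 c3 c4[OF False] by simp
  qed
qed

lemma graph_fin_nbr: "graph_inst V E \<Longrightarrow> finite {u. E v u}"
  unfolding graph_inst_def by (metis (no_types, lifting) mem_Collect_eq rev_finite_subset subsetI)

lemma accD:
  assumes "graph_inst V E" "all_accept (DK K) V E \<rho> m1 m2" "v \<in> V" "0 < K"
  shows "m2 v ! 0 = \<rho> v ! 0 \<and> m2 v ! 1 = \<rho> v ! 1 \<and>
      (if m1 v ! 0 then
         card {u. E v u \<and> m1 u ! 0} = K - 1 \<and>
         (\<forall>j<2. m2 v ! (4+j) = (\<rho> v ! j \<noteq> odd (card {u. E v u \<and> m1 u ! 0 \<and> m2 u ! j}))) \<and>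
         (\<forall>u. E v u \<longrightarrow> m1 u ! 0 \<longrightarrow> (\<forall>j<2. m2 u ! (4+j) = m2 v ! (4+j)))
       else
         pset E m1 v \<noteq> {} \<and>
         (\<forall>j<2. m2 v ! (2+j) = (m2 (Min (pset E m1 v)) ! (2+j) \<noteq> \<rho> v ! j)))"
proof -
  have d: "DK K (card V) v {u. E v u} (\<rho> v) (m1 v) (m2 v) (nbr_msgs E v m1 m2)"
    using assms(2,3) unfolding all_accept_def by blast
  show ?thesis
    using mp[OF DK_nbr[where E=E and v=v and K=K and n="card V" and rv="\<rho> v" and mA=m1 and mB=m2, OF graph_fin_nbr[OF assms(1)], THEN iffD1, OF d] assms(4)] .
qed

lemma accI:
  assumes "graph_inst V E"
    "\<And>v. v \<in> V \<Longrightarrow> 0 < K \<Longrightarrow> m2 v ! 0 = \<rho> v ! 0 \<and> m2 v ! 1 = \<rho> v ! 1 \<and>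
      (if m1 v ! 0 then
         card {u. E v u \<and> m1 u ! 0} = K - 1 \<and>
         (\<forall>j<2. m2 v ! (4+j) = (\<rho> v ! j \<noteq> odd (card {u. E v u \<and> m1 u ! 0 \<and> m2 u ! j}))) \<and>
         (\<forall>u. E v u \<longrightarrow> m1 u ! 0 \<longrightarrow> (\<forall>j<2. m2 u ! (4+j) = m2 v ! (4+j)))
       else
         pset E m1 v \<noteq> {} \<and>
         (\<forall>j<2. m2 v ! (2+j) = (m2 (Min (pset E m1 v)) ! (2+j) \<noteq> \<rho> v ! j)))"
  shows "all_accept (DK K) V E \<rho> m1 m2"
  unfolding all_accept_def
proof
  fix v assume v: "v \<in> V"
  show "DK K (card V) v {u. E v u} (\<rho> v) (m1 v) (m2 v) (nbr_msgs E v m1 m2)"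
    using DK_nbr[where E=E and v=v and K=K and n="card V" and rv="\<rho> v" and mA=m1 and mB=m2, OF graph_fin_nbr[OF assms(1)]] assms(2)[OF v] by blast
qed

primrec Y :: "(nat \<Rightarrow> nat) \<Rightarrow> (nat \<Rightarrow> bool) \<Rightarrow> nat \<Rightarrow> nat \<Rightarrow> bool" where
  "Y p y 0 x = False"
| "Y p y (Suc n) x = (y x \<noteq> Y p y n (p x))"

lemma Y_tele:
  assumes "\<forall>x\<in>V. p x \<in> V \<and> \<phi> x = (\<phi> (p x) \<noteq> y x)" "x \<in> V"
  shows "\<phi> x = (\<phi> ((p^^n) x) \<noteq> Y p y n x)"
  using assms(2)
proof (induction n arbitrary: x)
  case 0
  then show ?case by simp
next
  case (Suc n)
  have px: "p x \<in> V" and ph: "\<phi> x = (\<phi> (p x) \<noteq> y x)" using assms(1) Suc.prems by auto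
  have ih: "\<phi> (p x) = (\<phi> ((p^^n) (p x)) \<noteq> Y p y n (p x))" using Suc.IH[OF px] .
  have "(p^^Suc n) x = (p^^n) (p x)" by (simp only: funpow_Suc_right comp_def)
  then show ?case using ph ih by auto
qed

lemma Y_local:
  "(\<forall>k<n. y ((p^^k) x) = y' ((p^^k) x)) \<Longrightarrow> Y p y n x = Y p y' n x"
proof (induction n arbitrary: x)
  case 0
  then show ?case by simp
next
  case (Suc n)
  have "y x = y' x" using Suc.prems[rule_format, of 0] by simp
  moreover have "\<forall>k<n. y ((p^^k) (p x)) = y' ((p^^k) (p x))"
  proof (intro allI impI)
    fix k assume "k < n"
    then have "Suc k < Suc n" by simp
    then have "y ((p^^Suc k) x) = y' ((p^^Suc k) x)" using Suc.prems by blast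
    moreover have "(p^^Suc k) x = (p^^k) (p x)" by (simp only: funpow_Suc_right comp_def)
    ultimately show "y ((p^^k) (p x)) = y' ((p^^k) (p x))" by simp
  qed
  ultimately show ?case using Suc.IH by simp
qed

lemma funpow_in: "\<forall>x\<in>V. p x \<in> V \<Longrightarrow> x \<in> V \<Longrightarrow> (p^^k) x \<in> V"
  by (induction k) auto

lemma cycle_exists:
  assumes fin: "finite V" and w0: "w0 \<in> V" and cl: "\<forall>x\<in>V. p x \<in> V"
  shows "\<exists>w\<in>V. \<exists>m. (p^^Suc m) w = w \<and> (\<forall>k. 0 < k \<and> k \<le> m \<longrightarrow> (p^^k) w \<noteq> w)"
proof -
  define f where "f k = (p^^k) w0" for k
  have fV: "f ` {..card V} \<subseteq> V" using funpow_in[OF cl w0] by (auto simp: f_def)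
  have "\<not> inj_on f {..card V}"
  proof
    assume "inj_on f {..card V}"
    then have "card {..card V} \<le> card V" using card_inj_on_le[OF _ fV fin] by blast
    then show False by simp
  qed
  then obtain i j where ij: "i \<le> card V" "j \<le> card V" "i \<noteq> j" "f i = f j"
    unfolding inj_on_def by auto
  obtain a b where ab: "a < b" "f a = f b"
    using ij by (metis linorder_neqE_nat)
  define w where "w = f a"
  have wV: "w \<in> V" unfolding w_def f_def using funpow_in[OF cl w0] .
  have "(p^^(b - a)) w = f b" unfolding w_def f_def
    using ab(1) by (simp add: funpow_add[symmetric, THEN fun_cong, simplified comp_def])
  then have per: "(p^^(b - a)) w = w" using ab(2) w_def by simp
  define n where "n = (LEAST n. 0 < n \<and> (p^^n) w = w)"
  have ex: "0 < b - a \<and> (p^^(b - a)) w = w" using ab per by simp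
  have n: "0 < n \<and> (p^^n) w = w" unfolding n_def by (rule LeastI[of _ "b - a"]) (rule ex)
  then obtain m where m: "n = Suc m" by (cases n) auto
  have "\<forall>k. 0 < k \<and> k \<le> m \<longrightarrow> (p^^k) w \<noteq> w"
  proof (intro allI impI)
    fix k assume k: "0 < k \<and> k \<le> m"
    then have "k < n" using m by simp
    then show "(p^^k) w \<noteq> w" using not_less_Least[of k "\<lambda>n. 0 < n \<and> (p^^n) w = w"] k unfolding n_def by blast
  qed
  then show ?thesis using wV n m by blast
qed

lemma gi:
  assumes "graph_inst V E"
  shows "finite V" "V \<noteq> {}" "\<And>x y. E x y \<Longrightarrow> x \<in> V" "\<And>x y. E x y \<Longrightarrow> y \<in> V"
    "\<And>x y. E x y \<Longrightarrow> E y x" "\<And>x. \<not> E x x" "\<And>x y. x \<in> V \<Longrightarrow> y \<in> V \<Longrightarrow> E\<^sup>*\<^sup>* x y"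
  using assms unfolding graph_inst_def by blast+

lemma sound:
  assumes g: "graph_inst V E" and K: "0 < K" and nl: "(V, E) \<notin> clique_lang K"
  shows "acc_prob (DK K) 2 V E m1 m2 < 1/3"
proof -
  define A where "A = {\<rho> \<in> coins V 2. all_accept (DK K) V E \<rho> m1 (m2 \<rho>)}"
  have fin: "finite V" using gi[OF g] by blast
  have AC: "A \<subseteq> coins V 2" unfolding A_def by blast
  have acc: "\<And>\<rho> v. \<rho> \<in> A \<Longrightarrow> v \<in> V \<Longrightarrow> m2 \<rho> v ! 0 = \<rho> v ! 0 \<and> m2 \<rho> v ! 1 = \<rho> v ! 1 \<and>
      (if m1 v ! 0 then
         card {u. E v u \<and> m1 u ! 0} = K - 1 \<and>
         (\<forall>j<2. m2 \<rho> v ! (4+j) = (\<rho> v ! j \<noteq> odd (card {u. E v u \<and> m1 u ! 0 \<and> m2 \<rho> u ! j}))) \<and>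
         (\<forall>u. E v u \<longrightarrow> m1 u ! 0 \<longrightarrow> (\<forall>j<2. m2 \<rho> u ! (4+j) = m2 \<rho> v ! (4+j)))
       else
         pset E m1 v \<noteq> {} \<and>
         (\<forall>j<2. m2 \<rho> v ! (2+j) = (m2 \<rho> (Min (pset E m1 v)) ! (2+j) \<noteq> \<rho> v ! j)))"
    using accD[OF g _ _ K] unfolding A_def by blast
  have main: "card A * 4 \<le> card (coins V 2)"
  proof (cases "A = {}")
    case True
    then show ?thesis by simp
  next
    case False
    then obtain \<rho>0 where \<rho>0: "\<rho>0 \<in> A" by blast
    define S where "S = {x\<in>V. m1 x ! 0}"
    show ?thesis
    proof (cases "S = {}")
      case True
      define p where "p = (\<lambda>x. Min (pset E m1 x))"
      have pin: "\<And>x. x \<in> V \<Longrightarrow> p x \<in> pset E m1 x"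
      proof -
        fix x assume x: "x \<in> V"
        then have "\<not> m1 x ! 0" using True S_def by blast
        then have ne: "pset E m1 x \<noteq> {}" using acc[OF \<rho>0 x] by simp
        have "finite (pset E m1 x)" using graph_fin_nbr[OF g, of x]
          by (rule rev_finite_subset) (auto simp: pset_def)
        then show "p x \<in> pset E m1 x" unfolding p_def using ne by (rule Min_in)
      qed
      have pV: "\<forall>x\<in>V. p x \<in> V" using pin gi(4)[OF g] by (auto simp: pset_def)
      obtain w0 where w0: "w0 \<in> V" using gi(2)[OF g] by blast
      obtain w m where wV: "w \<in> V" and per: "(p^^Suc m) w = w"
        and mn: "\<forall>k. 0 < k \<and> k \<le> m \<longrightarrow> (p^^k) w \<noteq> w"
        using cycle_exists[OF fin w0 pV] by blast
      define F where "F j \<rho> = Y p (\<lambda>x. \<rho> x ! j) m (p w)" for j and \<rho> :: "nat \<Rightarrow> bool list"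
      have eqF: "\<rho> w ! j = F j \<rho>" if r: "\<rho> \<in> A" and j: "j < 2" for \<rho> j
      proof -
        define \<phi> where "\<phi> x = m2 \<rho> x ! (2+j)" for x
        have st: "\<forall>x\<in>V. p x \<in> V \<and> \<phi> x = (\<phi> (p x) \<noteq> \<rho> x ! j)"
        proof
          fix x assume x: "x \<in> V"
          then have "\<not> m1 x ! 0" using True S_def by blast
          then show "p x \<in> V \<and> \<phi> x = (\<phi> (p x) \<noteq> \<rho> x ! j)"
            using acc[OF r x] j pV x unfolding \<phi>_def p_def by simp
        qed
        have "\<phi> w = (\<phi> ((p^^Suc m) w) \<noteq> Y p (\<lambda>x. \<rho> x ! j) (Suc m) w)"
          by (rule Y_tele[OF st wV])
        then show ?thesis unfolding F_def using per by auto
      qed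
      have inv: "F j (\<rho>(w := xs)) = F j \<rho>" for j \<rho> xs
        unfolding F_def
      proof (rule Y_local, intro allI impI)
        fix k assume "k < m"
        then have "0 < Suc k \<and> Suc k \<le> m" by simp
        then have "(p^^Suc k) w \<noteq> w" using mn by blast
        moreover have "(p^^Suc k) w = (p^^k) (p w)" by (simp only: funpow_Suc_right comp_def)
        ultimately show "(\<rho>(w := xs)) ((p^^k) (p w)) ! j = \<rho> ((p^^k) (p w)) ! j" by simp
      qed
      show ?thesis
        by (rule count4[OF fin wV AC, of "F 0" "F 1"]) (use eqF inv in auto)
    next
      case False
      define NH where "NH x = insert x {y. E x y \<and> m1 y ! 0}" for x
      have deg: "\<And>x. x \<in> S \<Longrightarrow> card {u. E x u \<and> m1 u ! 0} = K - 1"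
        using acc[OF \<rho>0] unfolding S_def by auto
      have NHV: "\<And>x. x \<in> V \<Longrightarrow> NH x \<subseteq> V" unfolding NH_def using gi(4)[OF g] by auto
      have NHfin: "\<And>x. x \<in> V \<Longrightarrow> finite (NH x)" using NHV fin finite_subset by blast
      have "\<exists>a b. a \<in> S \<and> b \<in> S \<and> E a b \<and> NH a \<noteq> NH b"
      proof (rule ccontr)
        assume "\<not> ?thesis"
        then have H: "\<And>a b. a \<in> S \<Longrightarrow> b \<in> S \<Longrightarrow> E a b \<Longrightarrow> NH a = NH b" by blast
        obtain s where s: "s \<in> S" using False by blast
        have sV: "s \<in> V" using s S_def by blast
        have memC: "x \<in> S \<and> NH x = NH s" if x: "x \<in> NH s" for x
        proof (cases "x = s")
          case True then show ?thesis using s by simp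
        next
          case False
          then have "E s x \<and> m1 x ! 0" using x NH_def by auto
          then have "x \<in> S" using gi(4)[OF g] S_def by auto
          then show ?thesis using H[OF s \<open>x \<in> S\<close>] \<open>E s x \<and> m1 x ! 0\<close> by simp
        qed
        have cl: "\<forall>x\<in>NH s. \<forall>y\<in>NH s. x \<noteq> y \<longrightarrow> E x y"
        proof (intro ballI impI)
          fix x y assume x: "x \<in> NH s" and y: "y \<in> NH s" and xy: "x \<noteq> y"
          then have "y \<in> NH x" using memC[OF x] by simp
          then show "E x y" using xy NH_def by auto
        qed
        have nf: "finite {y. E s y \<and> m1 y ! 0}" using graph_fin_nbr[OF g, of s] by (rule rev_finite_subset) auto
        have "s \<notin> {y. E s y \<and> m1 y ! 0}" using gi(6)[OF g] by auto
        then have "card (NH s) = Suc (K - 1)" unfolding NH_def using nf deg[OF s] by simp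
        then have "card (NH s) = K" using K by simp
        then have "(V, E) \<in> clique_lang K" unfolding clique_lang_def using cl NHV[OF sV] by blast
        then show False using nl by blast
      qed
      then obtain a b where ab: "a \<in> S" "b \<in> S" "E a b" "NH a \<noteq> NH b" by blast
      obtain a' b' w where ab': "a' \<in> S" "b' \<in> S" "E a' b'" "w \<in> NH a'" "w \<notin> NH b'"
      proof (cases "NH a \<subseteq> NH b")
        case True
        then obtain w where "w \<in> NH b" "w \<notin> NH a" using ab(4) by blast
        then show ?thesis using that[of b a w] ab gi(5)[OF g] by blast
      next
        case False
        then obtain w where "w \<in> NH a" "w \<notin> NH b" by blast
        then show ?thesis using that[of a b w] ab by blast
      qed
      have aV: "a' \<in> V" and bV: "b' \<in> V" using ab' S_def by auto
      have wV: "w \<in> V" using NHV[OF aV] ab'(4) by blast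
      have par: "m2 \<rho> x ! (4+j) = xorset (\<lambda>y. \<rho> y ! j) (NH x)"
        if r: "\<rho> \<in> A" and x: "x \<in> S" and j: "j < 2" for \<rho> x j
      proof -
        have xV: "x \<in> V" and mx: "m1 x ! 0" using x S_def by auto
        have a1: "m2 \<rho> x ! (4+j) = (\<rho> x ! j \<noteq> odd (card {u. E x u \<and> m1 u ! 0 \<and> m2 \<rho> u ! j}))"
          using acc[OF r xV] mx j by simp
        have echo: "m2 \<rho> u ! j = \<rho> u ! j" if u: "u \<in> V" for u
        proof -
          have "j = 0 \<or> j = 1" using j by auto
          then show ?thesis using conjunct1[OF acc[OF r u]] conjunct1[OF conjunct2[OF acc[OF r u]]] by auto
        qed
        have s1: "{u. E x u \<and> m1 u ! 0 \<and> m2 \<rho> u ! j} = {u \<in> NH x - {x}. \<rho> u ! j}"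
          using echo gi(4,6)[OF g] unfolding NH_def by auto
        have "xorset (\<lambda>y. \<rho> y ! j) (NH x) = (\<rho> x ! j \<noteq> xorset (\<lambda>y. \<rho> y ! j) (NH x - {x}))"
          by (rule xorset_remove[OF NHfin[OF xV]]) (simp add: NH_def)
        then show ?thesis using a1 s1 unfolding xorset_def by simp
      qed
      define F where "F j \<rho> = (xorset (\<lambda>y. \<rho> y ! j) (NH a' - {w}) \<noteq> xorset (\<lambda>y. \<rho> y ! j) (NH b' - {w}))"
        for j and \<rho> :: "nat \<Rightarrow> bool list"
      have eqF: "\<rho> w ! j = F j \<rho>" if r: "\<rho> \<in> A" and j: "j < 2" for \<rho> j
      proof -
        have mb: "m1 b' ! 0" using ab'(2) S_def by auto
        have "m2 \<rho> b' ! (4+j) = m2 \<rho> a' ! (4+j)" using acc[OF r aV] ab'(1,3) mb j S_def by auto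
        then have "xorset (\<lambda>y. \<rho> y ! j) (NH a') = xorset (\<lambda>y. \<rho> y ! j) (NH b')"
          using par[OF r ab'(1) j] par[OF r ab'(2) j] by simp
        then show ?thesis unfolding F_def
          by (rule xorset_diff[OF NHfin[OF aV] NHfin[OF bV] ab'(4,5)])
      qed
      have inv: "F j (\<rho>(w := xs)) = F j \<rho>" for j \<rho> xs
      proof -
        have "xorset (\<lambda>y. (\<rho>(w := xs)) y ! j) (NH a' - {w}) = xorset (\<lambda>y. \<rho> y ! j) (NH a' - {w})"
          by (rule xorset_cong) simp
        moreover have "xorset (\<lambda>y. (\<rho>(w := xs)) y ! j) (NH b' - {w}) = xorset (\<lambda>y. \<rho> y ! j) (NH b' - {w})"
          by (rule xorset_cong) simp
        ultimately show ?thesis unfolding F_def by simp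
      qed
      show ?thesis
        by (rule count4[OF fin wV AC, of "F 0" "F 1"]) (use eqF inv in auto)
    qed
  qed
  show ?thesis unfolding acc_prob_def using acc_small[OF fin main[unfolded A_def]] .
qed

definition dst :: "(nat \<Rightarrow> nat \<Rightarrow> bool) \<Rightarrow> nat set \<Rightarrow> nat \<Rightarrow> nat" where
  "dst E S v = (LEAST d. \<exists>s\<in>S. (E^^d) v s)"

context
  fixes V E S
  assumes g: "graph_inst V E" and SV: "S \<subseteq> V" and Sne: "S \<noteq> {}"
begin

lemma dst_ex: "v \<in> V \<Longrightarrow> \<exists>s\<in>S. (E^^(dst E S v)) v s"
proof -
  assume v: "v \<in> V"
  obtain s where s: "s \<in> S" using Sne by blast
  have sV: "s \<in> V" using s SV by (rule subsetD[rotated])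
  have "E\<^sup>*\<^sup>* v s" by (rule gi(7)[OF g v sV])
  then obtain n where n: "(E^^n) v s" using rtranclp_imp_relpowp by metis
  have "\<exists>d. \<exists>s\<in>S. (E^^d) v s" using s n by (intro exI bexI)
  then show ?thesis unfolding dst_def by (rule LeastI_ex)
qed

lemma dst_le: "s \<in> S \<Longrightarrow> (E^^d) v s \<Longrightarrow> dst E S v \<le> d"
  unfolding dst_def by (rule Least_le) (rule bexI)

lemma dst_edge: "E u x \<Longrightarrow> dst E S u \<le> Suc (dst E S x)"
proof -
  assume e: "E u x"
  then have "x \<in> V" using gi(4)[OF g] by blast
  then obtain s where s: "s \<in> S" "(E^^(dst E S x)) x s" using dst_ex by blast
  have "(E^^Suc (dst E S x)) u s" by (rule relpowp_Suc_I2[where P=E, OF e s(2)])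
  then show ?thesis by (rule dst_le[OF s(1)])
qed

lemma dst_0: "v \<in> V \<Longrightarrow> dst E S v = 0 \<longleftrightarrow> v \<in> S"
proof
  assume v: "v \<in> V" and z: "dst E S v = 0"
  have "\<exists>s\<in>S. (E^^0) v s" using dst_ex[OF v] unfolding z .
  then show "v \<in> S" by simp
next
  assume "v \<in> S"
  then have "dst E S v \<le> 0" using dst_le[of v 0 v] by simp
  then show "dst E S v = 0" by simp
qed

lemma dst_Suc: "v \<in> V \<Longrightarrow> dst E S v = Suc d \<Longrightarrow> \<exists>x. E v x \<and> dst E S x = d"
proof -
  assume v: "v \<in> V" and d: "dst E S v = Suc d"
  have "\<exists>s\<in>S. (E^^Suc d) v s" using dst_ex[OF v] unfolding d .
  then obtain s where s: "s \<in> S" "(E^^Suc d) v s" by blast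
  obtain x where x: "E v x" "(E^^d) x s" using relpowp_Suc_D2[OF s(2)] by blast
  have "dst E S x \<le> d" using dst_le[OF s(1) x(2)] .
  moreover have "dst E S v \<le> Suc (dst E S x)" using dst_edge[OF x(1)] .
  ultimately show ?thesis using x d by auto
qed

end

lemma mod3_lemma: "d \<le> x \<Longrightarrow> x \<le> d + 2 \<Longrightarrow> (x mod 3 = (Suc d mod 3 + 2) mod 3) \<longleftrightarrow> x = d"
  by presburger

definition M1h :: "(nat \<Rightarrow> nat \<Rightarrow> bool) \<Rightarrow> nat set \<Rightarrow> nat \<Rightarrow> bool list" where
  "M1h E S v = [v \<in> S, 1 \<le> dst E S v mod 3, 2 \<le> dst E S v mod 3]"

lemma lab_M1h: "lab (M1h E S v) = dst E S v mod 3"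
proof -
  have "dst E S v mod 3 < 3" by simp
  then have "dst E S v mod 3 = 0 \<or> dst E S v mod 3 = 1 \<or> dst E S v mod 3 = 2" by linarith
  then show ?thesis unfolding lab_def M1h_def by auto
qed

definition M2h :: "(nat \<Rightarrow> nat \<Rightarrow> bool) \<Rightarrow> nat set \<Rightarrow> (nat \<Rightarrow> bool list) \<Rightarrow> nat \<Rightarrow> bool list" where
  "M2h E S \<rho> v = (let p = (\<lambda>x. Min (pset E (M1h E S) x)) in
     [\<rho> v ! 0, \<rho> v ! 1, Y p (\<lambda>x. \<rho> x ! 0) (dst E S v) v, Y p (\<lambda>x. \<rho> x ! 1) (dst E S v) v,
      xorset (\<lambda>x. \<rho> x ! 0) S, xorset (\<lambda>x. \<rho> x ! 1) S])"

lemma complete_acc: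
  assumes g: "graph_inst V E" and K: "0 < K" and SV: "S \<subseteq> V" and cS: "card S = K"
    and cl: "\<forall>x\<in>S. \<forall>y\<in>S. x \<noteq> y \<longrightarrow> E x y"
  shows "all_accept (DK K) V E \<rho> (M1h E S) (M2h E S \<rho>)"
proof (rule accI[OF g])
  have fin: "finite V" using gi[OF g] by blast
  have finS: "finite S" using fin SV finite_subset by blast
  have Sne: "S \<noteq> {}" using cS K by auto
  define p where "p = (\<lambda>x. Min (pset E (M1h E S) x))"
  have M2: "M2h E S \<rho> v = [\<rho> v ! 0, \<rho> v ! 1, Y p (\<lambda>x. \<rho> x ! 0) (dst E S v) v, Y p (\<lambda>x. \<rho> x ! 1) (dst E S v) v,
      xorset (\<lambda>x. \<rho> x ! 0) S, xorset (\<lambda>x. \<rho> x ! 1) S]" for v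
    unfolding M2h_def p_def Let_def by simp
  fix v assume v: "v \<in> V" and "0 < K"
  have echo: "M2h E S \<rho> u ! j = \<rho> u ! j" if "j < 2" for u j
  proof -
    have "j = 0 \<or> j = 1" using that by auto
    then show ?thesis unfolding M2 by auto
  qed
  have par4: "M2h E S \<rho> u ! (4+j) = xorset (\<lambda>x. \<rho> x ! j) S" if "j < 2" for u j
  proof -
    have "j = 0 \<or> j = 1" using that by auto
    then show ?thesis unfolding M2 by auto
  qed
  have phi: "M2h E S \<rho> u ! (2+j) = Y p (\<lambda>x. \<rho> x ! j) (dst E S u) u" if "j < 2" for u j
  proof -
    have "j = 0 \<or> j = 1" using that by auto
    then show ?thesis unfolding M2 by auto
  qed
  have m10: "M1h E S u ! 0 = (u \<in> S)" for u unfolding M1h_def by simp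
  show "M2h E S \<rho> v ! 0 = \<rho> v ! 0 \<and> M2h E S \<rho> v ! 1 = \<rho> v ! 1 \<and>
      (if M1h E S v ! 0 then
         card {u. E v u \<and> M1h E S u ! 0} = K - 1 \<and>
         (\<forall>j<2. M2h E S \<rho> v ! (4+j) = (\<rho> v ! j \<noteq> odd (card {u. E v u \<and> M1h E S u ! 0 \<and> M2h E S \<rho> u ! j}))) \<and>
         (\<forall>u. E v u \<longrightarrow> M1h E S u ! 0 \<longrightarrow> (\<forall>j<2. M2h E S \<rho> u ! (4+j) = M2h E S \<rho> v ! (4+j)))
       else
         pset E (M1h E S) v \<noteq> {} \<and>
         (\<forall>j<2. M2h E S \<rho> v ! (2+j) = (M2h E S \<rho> (Min (pset E (M1h E S) v)) ! (2+j) \<noteq> \<rho> v ! j)))"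
  proof (cases "v \<in> S")
    case True
    have nb: "{u. E v u \<and> M1h E S u ! 0} = S - {v}"
      using cl True gi(6)[OF g] unfolding m10 by auto
    have c: "card {u. E v u \<and> M1h E S u ! 0} = K - 1" unfolding nb using finS True cS by simp
    have pj: "M2h E S \<rho> v ! (4+j) = (\<rho> v ! j \<noteq> odd (card {u. E v u \<and> M1h E S u ! 0 \<and> M2h E S \<rho> u ! j}))"
      if j: "j < 2" for j
    proof -
      have "{u. E v u \<and> M1h E S u ! 0 \<and> M2h E S \<rho> u ! j} = {x \<in> S - {v}. \<rho> x ! j}"
        using nb echo[OF j] by auto
      moreover have "xorset (\<lambda>x. \<rho> x ! j) S = (\<rho> v ! j \<noteq> xorset (\<lambda>x. \<rho> x ! j) (S - {v}))"
        by (rule xorset_remove[OF finS True])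
      ultimately show ?thesis unfolding par4[OF j] xorset_def by simp
    qed
    show ?thesis using True c pj echo par4 unfolding m10 by simp
  next
    case False
    have "dst E S v \<noteq> 0" using dst_0[OF g SV Sne v] False by simp
    then obtain d where d: "dst E S v = Suc d" by (cases "dst E S v") auto
    have ps: "pset E (M1h E S) v = {u. E v u \<and> dst E S u = d}"
    proof -
      have "E v u \<Longrightarrow> (lab (M1h E S u) = (lab (M1h E S v) + 2) mod 3) = (dst E S u = d)" for u
      proof -
        assume e: "E v u"
        have "dst E S v \<le> Suc (dst E S u)" using dst_edge[OF g SV Sne e] .
        moreover have "dst E S u \<le> Suc (dst E S v)" using dst_edge[OF g SV Sne gi(5)[OF g e]] .
        ultimately have "d \<le> dst E S u" "dst E S u \<le> d + 2" using d by auto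
        then show ?thesis unfolding lab_M1h d by (rule mod3_lemma)
      qed
      then show ?thesis unfolding pset_def by auto
    qed
    have ne: "pset E (M1h E S) v \<noteq> {}" unfolding ps using dst_Suc[OF g SV Sne v d] by blast
    have "finite (pset E (M1h E S) v)" using graph_fin_nbr[OF g, of v]
      by (rule rev_finite_subset) (auto simp: pset_def)
    then have "p v \<in> pset E (M1h E S) v" unfolding p_def using ne by (rule Min_in)
    then have dp: "dst E S (p v) = d" unfolding ps by blast
    have "M2h E S \<rho> v ! (2+j) = (M2h E S \<rho> (p v) ! (2+j) \<noteq> \<rho> v ! j)" if j: "j < 2" for j
      unfolding phi[OF j] d dp by auto
    then show ?thesis using False ne echo unfolding m10 p_def by simp
  qed
qed

lemma acc_one:
  assumes fin: "finite V" and all: "\<And>\<rho>. \<rho> \<in> coins V 2 \<Longrightarrow> all_accept D V E \<rho> m1 (m2 \<rho>)"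
  shows "acc_prob D 2 V E m1 m2 > 2/3"
proof -
  have eq: "{\<rho> \<in> coins V 2. all_accept D V E \<rho> m1 (m2 \<rho>)} = coins V 2" using all by blast
  have pos: "card (coins V 2) > 0" using finite_coins[OF fin] coins_ne by (simp add: card_gt_0_iff)
  then show ?thesis unfolding acc_prob_def eq by simp
qed

theorem corollary1p6:
  shows "\<exists>c::nat. \<forall>K::nat. dMAM (\<lambda>_. c) (clique_lang K)"
proof (intro exI allI)
  fix K :: nat
  have r: "\<forall>n. (\<lambda>_. 2::nat) n \<le> (\<lambda>_. 6::nat) n" by simp
  have main: "graph_inst V E \<Longrightarrow>
        ((V, E) \<in> clique_lang K \<longrightarrow>
           (\<exists>m1 m2. (\<forall>v. length (m1 v) \<le> (\<lambda>_. 6::nat) (card V)) \<and> (\<forall>\<rho> v. length (m2 \<rho> v) \<le> (\<lambda>_. 6::nat) (card V))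
                 \<and> acc_prob (DK K) ((\<lambda>_. 2::nat) (card V)) V E m1 m2 > 2/3))
      \<and> ((V, E) \<notin> clique_lang K \<longrightarrow>
           (\<forall>m1 m2. acc_prob (DK K) ((\<lambda>_. 2::nat) (card V)) V E m1 m2 < 1/3))" for V E
  proof -
    assume g: "graph_inst V E"
    have fin: "finite V" using gi[OF g] by blast
    show ?thesis
    proof (cases "K = 0")
      case True
      have inL: "(V, E) \<in> clique_lang K" unfolding clique_lang_def True by auto
      have "acc_prob (DK K) 2 V E (\<lambda>_. []) (\<lambda>_ _. []) > 2/3"
        by (rule acc_one[OF fin]) (simp add: all_accept_def DK_def True)
      then show ?thesis using inL by (intro conjI impI) (auto intro!: exI[of _ "\<lambda>_. []"] exI[of _ "\<lambda>_ _. []"])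
    next
      case False
      then have K: "0 < K" by simp
      show ?thesis
      proof (intro conjI impI allI)
        assume "(V, E) \<in> clique_lang K"
        then obtain S where SV: "S \<subseteq> V" and cS: "card S = K" and cl: "\<forall>x\<in>S. \<forall>y\<in>S. x \<noteq> y \<longrightarrow> E x y"
          unfolding clique_lang_def by blast
        have "acc_prob (DK K) 2 V E (M1h E S) (M2h E S) > 2/3"
          by (rule acc_one[OF fin]) (rule complete_acc[OF g K SV cS cl])
        moreover have "\<forall>v. length (M1h E S v) \<le> 6" by (simp add: M1h_def)
        moreover have "\<forall>\<rho> v. length (M2h E S \<rho> v) \<le> 6" by (simp add: M2h_def Let_def)
        ultimately show "\<exists>m1 m2. (\<forall>v. length (m1 v) \<le> (\<lambda>_. 6::nat) (card V)) \<and> (\<forall>\<rho> v. length (m2 \<rho> v) \<le> (\<lambda>_. 6::nat) (card V))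
                 \<and> acc_prob (DK K) ((\<lambda>_. 2::nat) (card V)) V E m1 m2 > 2/3" by auto
      next
        fix m1 m2
        assume "(V, E) \<notin> clique_lang K"
        then show "acc_prob (DK K) ((\<lambda>_. 2::nat) (card V)) V E m1 m2 < 1/3"
          using sound[OF g K] by simp
      qed
    qed
  qed
  show "dMAM (\<lambda>_. 6) (clique_lang K)"
    unfolding dMAM_def
    apply (rule exI[of _ "\<lambda>_. 2::nat"], rule exI[of _ "DK K"])
    using r main by blast
qed


end
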